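(* Let $\mathcal A\in\mathbb C^{n\times n}$ be nonsingular and positive definite, and suppose $\mathcal A=\mathcal P_1+\mathcal P_2$ with $\mathcal P_1,\mathcal P_2$ positive semidefinite; let $\Sigma$ be Hermitian positive definite. With $\tilde{\mathcal P}_i,\tilde{\mathcal P}_\pm,m_i,\Gamma_{\mathrm{PPS}}$ as in the context, suppose that $\tilde{\mathcal P}_1\tilde{\mathcal P}_2x_\lambda=\tilde{\mathcal P}_2\tilde{\mathcal P}_1x_\lambda$ for all $x_\lambda\in\mathrm{ev}(\tilde{\mathcal P}_+^{-1}\tilde{\mathcal P}_-)$. Then $$\rho(\Gamma_{\mathrm{PPS}})\le\max_{x_\lambda\in\mathrm{ev}(\tilde{\mathcal P}_+^{-1}\tilde{\mathcal P}_-)}\min\{m_1(x_\lambda),m_2(x_\lambda)\}<1.$$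
   Context: A matrix $\mathcal P\in\mathbb C^{n\times n}$ is called positive semidefinite if $\mathcal P+\mathcal P^*$ is Hermitian positive semidefinite, and positive definite if $\mathcal P+\mathcal P^*$ is Hermitian positive definite; $\mathcal P$ need not be Hermitian. $\mathcal I$ is the identity, $\|\cdot\|$ the spectral norm, $\rho(\cdot)$ the spectral radius, and $\mathrm{ev}(M)$ the set of all nonzero eigenvectors of a square matrix $M$; $\Sigma^{1/2}$ is the HPD square root of $\Sigma$. $\Gamma_{\mathrm{PPS}}=(\Sigma+\mathcal P_1)^{-1}(\Sigma-\mathcal P_2)(\Sigma+\mathcal P_2)^{-1}(\Sigma-\mathcal P_1)$; $\tilde{\mathcal P}_i=\Sigma^{-1/2}\mathcal P_i\Sigma^{-1/2}$; $\tilde{\mathcal P}_+=(\mathcal I+\tilde{\mathcal P}_2)(\mathcal I+\tilde{\mathcal P}_1)$; $\tilde{\mathcal P}_-=(\mathcal I-\tilde{\mathcal P}_2)(\mathcal I-\tilde{\mathcal P}_1)$. For square $\mathcal P$ with $\mathcal I+\mathcal P$ invertible, $f(\mathcal P)=\|(\mathcal I+\mathcal P)^{-1}(\mathcal I-\mathcal P)\|$. For $i=1,2$ and $x\neq0$, $m_i(x)=f(\tilde{\mathcal P}_{3-i})\sqrt{\dfrac{x^*(\mathcal I+\tilde{\mathcal P}_i^*\tilde{\mathcal P}_i)x-x^*(\tilde{\mathcal P}_i+\tilde{\mathcal P}_i^* )x}{x^*(\mathcal I+\tilde{\mathcal P}_i^*\tilde{\mathcal P}_i)x+x^*(\tilde{\mathcal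 P}_i+\tilde{\mathcal P}_i^* )x}}$. *)

theory Defs
  imports "HOL-Analysis.Analysis"
begin

definition cmat_adj :: "complex ^'n ^'n \<Rightarrow> complex ^'n ^'n" where
  "cmat_adj A = (\<chi> i j. cnj (A $ j $ i))"

definition qform :: "complex ^'n ^'n \<Rightarrow> complex ^'n \<Rightarrow> complex" where
  "qform M x = (\<Sum>i\<in>UNIV. cnj (x $ i) * (M *v x) $ i)"

definition hermitian :: "complex ^'n ^'n \<Rightarrow> bool" where
  "hermitian M \<longleftrightarrow> cmat_adj M = M"

definition herm_pos_def :: "complex ^'n ^'n \<Rightarrow> bool" where
  "herm_pos_def M \<longleftrightarrow> hermitian M \<and> (\<forall>x. x \<noteq> 0 \<longrightarrow> qform M x \<in> \<real> \<and> 0 < Re (qform M x))"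

definition herm_pos_semidef :: "complex ^'n ^'n \<Rightarrow> bool" where
  "herm_pos_semidef M \<longleftrightarrow> hermitian M \<and> (\<forall>x. qform M x \<in> \<real> \<and> 0 \<le> Re (qform M x))"

text \<open>Paper's (non-Hermitian) notions: P is positive (semi)definite iff P + P^* is HP(S)D.\<close>
definition pos_def :: "complex ^'n ^'n \<Rightarrow> bool" where
  "pos_def P \<longleftrightarrow> herm_pos_def (P + cmat_adj P)"

definition pos_semidef :: "complex ^'n ^'n \<Rightarrow> bool" where
  "pos_semidef P \<longleftrightarrow> herm_pos_semidef (P + cmat_adj P)"

definition hpd_sqrt :: "complex ^'n ^'n \<Rightarrow> complex ^'n ^'n" where
  "hpd_sqrt S = (THE R. herm_pos_def R \<and> R ** R = S)"

definition spec_norm :: "complex ^'n ^'n \<Rightarrow> real" where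
  "spec_norm A = onorm (\<lambda>x. A *v x)"

definition cmat_eigenvalues :: "complex ^'n ^'n \<Rightarrow> complex set" where
  "cmat_eigenvalues M = {l. \<exists>x. x \<noteq> 0 \<and> M *v x = l *s x}"

definition spec_radius :: "complex ^'n ^'n \<Rightarrow> real" where
  "spec_radius M = Sup (cmod ` cmat_eigenvalues M)"

definition ev :: "complex ^'n ^'n \<Rightarrow> (complex ^'n) set" where
  "ev M = {x. x \<noteq> 0 \<and> (\<exists>l. M *v x = l *s x)}"

definition fP :: "complex ^'n ^'n \<Rightarrow> real" where
  "fP P = spec_norm (matrix_inv (mat 1 + P) ** (mat 1 - P))"

text \<open>mfun Q P x = f(Q) * sqrt((x^*(I+P^*P)x - x^*(P+P^*)x) / (x^*(I+P^*P)x + x^*(P+P^*)x));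
  m_i(x) = mfun (tilde P_{3-i}) (tilde P_i) x. The quadratic forms are real (Hermitian matrices).\<close>
definition mfun :: "complex ^'n ^'n \<Rightarrow> complex ^'n ^'n \<Rightarrow> complex ^'n \<Rightarrow> real" where
  "mfun Q P x = fP Q * sqrt (
     (Re (qform (mat 1 + cmat_adj P ** P) x) - Re (qform (P + cmat_adj P) x)) /
     (Re (qform (mat 1 + cmat_adj P ** P) x) + Re (qform (P + cmat_adj P) x)))"

end

theory Submission
  imports Defs "Jordan_Normal_Form.Spectral_Radius"
begin


lemma eig_exists_jnf:
  fixes M :: "complex^'n^'n"
  shows "\<exists>l x. x \<noteq> 0 \<and> M *v x = l *s x"
proof -
  define n where "n = CARD('n)"
  have n0: "n > 0" by (simp add: n_def)
  obtain f :: "nat \<Rightarrow> 'n" where bij: "bij_betw f {0..<n} UNIV"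
    using ex_bij_betw_nat_finite[of "UNIV::'n set"] unfolding n_def by auto
  define A where "A = Matrix.mat n n (\<lambda>(i,j). vec_nth (vec_nth M (f i)) (f j))"
  have Ac: "A \<in> carrier_mat n n" by (simp add: A_def)
  obtain l where "l \<in> spectrum A" using spectrum_non_empty[OF Ac n0] by blast
  hence "eigenvalue A l" by (simp add: spectrum_def)
  then obtain v where ev: "eigenvector A v l" unfolding eigenvalue_def by blast
  have vc: "v \<in> carrier_vec n" and vnz: "v \<noteq> 0\<^sub>v n" and Av: "A *\<^sub>v v = l \<cdot>\<^sub>v v"
    using ev Ac unfolding eigenvector_def by auto
  have dv: "dim_vec v = n" using vc by simp
  define g where "g = inv_into {0..<n} f"
  have fg: "f (g k) = k" for k unfolding g_def using bij by (simp add: bij_betw_inv_into_right)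
  have gl: "g k < n" for k unfolding g_def using bij
    by (metis atLeastLessThan_iff bij_betw_def inv_into_into UNIV_I)
  have gf: "g (f i) = i" if "i < n" for i unfolding g_def using bij that
    by (simp add: bij_betw_def inv_into_f_f)
  define x :: "complex^'n" where "x = (\<chi> k. vec_index v (g k))"
  have xf: "vec_nth x (f i) = vec_index v i" if "i < n" for i
    unfolding x_def using gf[OF that] by simp
  have "x \<noteq> 0"
  proof
    assume x0: "x = 0"
    have "v = 0\<^sub>v n"
    proof (rule eq_vecI)
      fix i assume "i < dim_vec (0\<^sub>v n)"
      hence i: "i < n" by simp
      have "vec_index v i = vec_nth x (f i)" using xf[OF i] by simp
      also have "\<dots> = 0" using x0 by simp
      finally show "vec_index v i = vec_index (0\<^sub>v n) i" using i by simp
    qed (simp add: dv)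
    thus False using vnz by simp
  qed
  moreover have "M *v x = l *s x"
  proof (subst Finite_Cartesian_Product.vec_eq_iff, rule allI)
    fix k
    define i where "i = g k"
    have i: "i < n" and k: "k = f i" unfolding i_def by (simp_all add: gl fg)
    have "vec_nth (M *v x) k = (\<Sum>k'\<in>UNIV. vec_nth (vec_nth M k) k' * vec_nth x k')"
      by (simp add: matrix_vector_mult_def)
    also have "\<dots> = (\<Sum>j\<in>{0..<n}. vec_nth (vec_nth M k) (f j) * vec_nth x (f j))"
      by (rule sum.reindex_bij_betw[OF bij, symmetric])
    also have "\<dots> = (\<Sum>j\<in>{0..<n}. vec_index (row A i) j * vec_index v j)"
      by (intro sum.cong refl) (simp add: A_def k xf i)
    also have "\<dots> = vec_index (A *\<^sub>v v) i"
      using i Ac dv by (simp add: scalar_prod_def)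
    also have "\<dots> = l * vec_index v i" using Av i dv by simp
    also have "\<dots> = vec_nth (l *s x) k" using xf[OF i] k by simp
    finally show "vec_nth (M *v x) k = vec_nth (l *s x) k" .
  qed
  ultimately show ?thesis by blast
qed

hide_const (open) Matrix.mat Matrix.vec Matrix.orthogonal Matrix.row Matrix.col
hide_fact (open) Matrix.vec_eq_iff Matrix.orthogonal_def
no_notation Matrix.vec_index (infixl \<open>$\<close> 100)




definition cd :: "complex^'n \<Rightarrow> complex^'n \<Rightarrow> complex" where
  "cd x y = (\<Sum>i\<in>UNIV. cnj (x$i) * y$i)"

lemma qform_cd: "qform M x = cd x (M *v x)"
  by (simp add: qform_def cd_def)

lemma cd_add_right: "cd x (y + z) = cd x y + cd x z"
  by (simp add: cd_def distrib_left sum.distrib)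
lemma cd_add_left: "cd (x + y) z = cd x z + cd y z"
  by (simp add: cd_def distrib_right sum.distrib)
lemma cd_diff_right: "cd x (y - z) = cd x y - cd x z"
  by (simp add: cd_def right_diff_distrib sum_subtractf)
lemma cd_diff_left: "cd (x - y) z = cd x z - cd y z"
  by (simp add: cd_def left_diff_distrib sum_subtractf)
lemma cd_smult_right: "cd x (c *s y) = c * cd x y"
  by (simp add: cd_def sum_distrib_left mult_ac)
lemma cd_smult_left: "cd (c *s x) y = cnj c * cd x y"
  by (simp add: cd_def sum_distrib_left mult_ac)
lemma scaleR_smult: "(c::real) *\<^sub>R (y::complex^'n) = (of_real c) *s y"
  by (simp add: vec_eq_iff scaleR_conv_of_real[where 'a=complex])
lemma cd_scaleR_right: "cd x (c *\<^sub>R y) = of_real c * cd x y"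
  by (simp add: scaleR_smult cd_smult_right)
lemma cd_scaleR_left: "cd (c *\<^sub>R x) y = of_real c * cd x y"
  by (simp add: scaleR_smult cd_smult_left)
lemma cd_zero_right[simp]: "cd x 0 = 0" by (simp add: cd_def)
lemma cd_zero_left[simp]: "cd 0 x = 0" by (simp add: cd_def)
lemma cd_sum_right: "cd x (\<Sum>u\<in>U. f u) = (\<Sum>u\<in>U. cd x (f u))"
  by (induction U rule: infinite_finite_induct) (auto simp: cd_add_right)
lemma cd_sum_left: "cd (\<Sum>u\<in>U. f u) x = (\<Sum>u\<in>U. cd (f u) x)"
  by (induction U rule: infinite_finite_induct) (auto simp: cd_add_left)
lemma cd_cnj: "cnj (cd x y) = cd y x"
  by (simp add: cd_def mult.commute)
lemma Re_cd: "Re (cd x y) = inner x y"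
  by (simp add: cd_def inner_vec_def inner_complex_def Re_sum)
lemma cd_self: "cd x x = of_real ((norm x)^2)"
proof -
  have "cd x x = (\<Sum>i\<in>UNIV. of_real ((cmod (x$i))^2))"
    unfolding cd_def by (intro sum.cong refl) (metis complex_norm_square of_real_power mult.commute)
  also have "\<dots> = of_real (\<Sum>i\<in>UNIV. (cmod (x$i))^2)" by simp
  also have "(\<Sum>i\<in>UNIV. (cmod (x$i))^2) = (norm x)^2"
    by (simp add: norm_vec_def L2_set_def sum_nonneg)
  finally show ?thesis .
qed
lemma Re_cd_self: "Re (cd x x) = (norm x)^2"
  by (simp add: cd_self)
lemma cd_self_eq_0: "cd x x = 0 \<longleftrightarrow> x = 0"
  by (simp add: cd_self)

lemma cd_adj: "cd x (cmat_adj M *v y) = cd (M *v x) y"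
  unfolding cd_def cmat_adj_def matrix_vector_mult_def cnj_sum
  by (simp add: sum_distrib_left sum_distrib_right mult_ac)
   (subst sum.swap, simp add: mult_ac)

lemma adj_adj[simp]: "cmat_adj (cmat_adj M) = M"
  by (simp add: cmat_adj_def vec_eq_iff)
lemma adj_add: "cmat_adj (A + B) = cmat_adj A + cmat_adj B"
  by (simp add: cmat_adj_def vec_eq_iff)
lemma adj_diff: "cmat_adj (A - B) = cmat_adj A - cmat_adj B"
  by (simp add: cmat_adj_def vec_eq_iff)
lemma adj_mat1[simp]: "cmat_adj (mat 1) = mat 1"
  by (simp add: cmat_adj_def vec_eq_iff Finite_Cartesian_Product.mat_def)
lemma adj_mult: "cmat_adj (A ** B) = cmat_adj B ** cmat_adj A"
  by (simp add: cmat_adj_def vec_eq_iff matrix_matrix_mult_def cnj_sum mult.commute)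

lemma herm_cd: "hermitian H \<Longrightarrow> cd x (H *v y) = cd (H *v x) y"
  by (metis cd_adj hermitian_def)

lemma qform_herm_real: "hermitian H \<Longrightarrow> cnj (qform H x) = qform H x"
  by (metis cd_cnj herm_cd qform_cd)

lemma minv_props:
  fixes A :: "complex^'n^'n"
  assumes "invertible A"
  shows "A ** matrix_inv A = mat 1" "matrix_inv A ** A = mat 1"
proof -
  have "\<exists>A'. A ** A' = mat 1 \<and> A' ** A = mat 1" using assms by (simp add: invertible_def)
  hence "A ** matrix_inv A = mat 1 \<and> matrix_inv A ** A = mat 1"
    unfolding matrix_inv_def by (rule someI_ex)
  thus "A ** matrix_inv A = mat 1" "matrix_inv A ** A = mat 1" by auto
qed

lemma minv_unique:
  fixes A B :: "complex^'n^'n"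
  assumes "A ** B = mat 1"
  shows "matrix_inv A = B" "invertible A"
proof -
  have BA: "B ** A = mat 1" using assms matrix_left_right_inverse by blast
  show inv: "invertible A" using assms BA by (auto simp: invertible_def)
  have "matrix_inv A = (B ** A) ** matrix_inv A" by (simp add: BA)
  also have "\<dots> = B ** (A ** matrix_inv A)" by (simp add: matrix_mul_assoc)
  also have "\<dots> = B" using minv_props(1)[OF inv] by simp
  finally show "matrix_inv A = B" .
qed

lemma invertible_ker:
  fixes A :: "complex^'n^'n"
  assumes "\<And>x. A *v x = 0 \<Longrightarrow> x = 0"
  shows "invertible A"
  using assms matrix_left_invertible_ker invertible_left_inverse by blast

lemma invertible_ker_iff:
  fixes A :: "complex^'n^'n"
  assumes "invertible A" "A *v x = 0" shows "x = 0"
  by (metis assms matrix_vector_mul_assoc matrix_vector_mul_lid matrix_vector_mult_0_right minv_props(2))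

lemma adj_inv:
  fixes A :: "complex^'n^'n"
  assumes "invertible A"
  shows "cmat_adj (matrix_inv A) = matrix_inv (cmat_adj A)"
proof -
  have "cmat_adj A ** cmat_adj (matrix_inv A) = mat 1"
    by (metis adj_mult adj_mat1 minv_props(2)[OF assms])
  thus ?thesis using minv_unique(1) by metis
qed

lemma minv_mult_vec:
  fixes A :: "complex^'n^'n"
  assumes "invertible A"
  shows "matrix_inv A *v (A *v x) = x" "A *v (matrix_inv A *v x) = x"
  by (simp_all add: matrix_vector_mul_assoc minv_props[OF assms])

lemma mv_smult: "(A::complex^'n^'n) *v (c *s x) = c *s (A *v x)"
  by (rule vector_scalar_commute)
lemma mv_scaleR: "(A::complex^'n^'n) *v (c *\<^sub>R x) = c *\<^sub>R (A *v x)"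
  by (simp add: scaleR_smult mv_smult)
lemma mv_sum: "(A::complex^'n^'n) *v (\<Sum>u\<in>U. f u) = (\<Sum>u\<in>U. A *v f u)"
  by (induction U rule: infinite_finite_induct) (auto simp: matrix_vector_right_distrib)




definition ONE :: "complex^'n^'n \<Rightarrow> (complex^'n) set \<Rightarrow> bool" where
  "ONE H U \<longleftrightarrow> (\<forall>u\<in>U. norm u = 1 \<and> (\<exists>\<mu>. H *v u = \<mu> *s u)) \<and> (\<forall>u\<in>U. \<forall>v\<in>U. u \<noteq> v \<longrightarrow> cd u v = 0)"

lemma ONE_bound:
  fixes U :: "(complex^'n) set"
  assumes "ONE H U" shows "finite U \<and> card U \<le> DIM(complex^'n)"
proof -
  have "pairwise orthogonal U" unfolding pairwise_def orthogonal_def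
  proof (intro ballI impI)
    fix u v assume "u \<in> U" "v \<in> U" "u \<noteq> v"
    hence "cd u v = 0" using assms unfolding ONE_def by blast
    thus "inner u v = 0" by (simp flip: Re_cd)
  qed
  moreover have "0 \<notin> U"
  proof
    assume "0 \<in> U" thus False using assms unfolding ONE_def by auto
  qed
  ultimately have "independent U" by (rule pairwise_orthogonal_independent)
  thus ?thesis by (rule independent_bound)
qed

lemma linear_cd: "linear (\<lambda>x. cd u x)"
  by (rule linearI) (simp_all add: cd_add_right cd_scaleR_right scaleR_conv_of_real[where 'a=complex])

lemma cont_cd: "continuous_on S (\<lambda>x. cd u x)"
  using linear_cd linear_conv_bounded_linear linear_continuous_on by blast

lemma cont_mv: "continuous_on S (\<lambda>x. (A::complex^'n^'n) *v x)"
  using matrix_vector_mul_linear linear_conv_bounded_linear linear_continuous_on by blast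

lemma quad_zero:
  fixes a b :: real
  assumes "\<And>t. a * t + b * t^2 \<le> 0" shows "a = 0"
proof (rule ccontr)
  assume "a \<noteq> 0"
  define t where "t = a / (\<bar>b\<bar> + 1)"
  have pos: "\<bar>b\<bar> + 1 > 0" by simp
  have e1: "a * t + b * t^2 = t * (a + b * t)" by (simp add: power2_eq_square algebra_simps)
  have e2: "a + b * t = a * ((\<bar>b\<bar> + 1 + b) / (\<bar>b\<bar> + 1))"
    unfolding t_def using pos by (simp add: field_simps)
  have q: "(\<bar>b\<bar> + 1 + b) / (\<bar>b\<bar> + 1) > 0" using pos by (intro divide_pos_pos) linarith+
  have "t * (a + b * t) > 0"
  proof (cases "a > 0")
    case True
    hence "t > 0" unfolding t_def using pos by simp
    moreover have "a + b * t > 0" unfolding e2 using True q by simp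
    ultimately show ?thesis by simp
  next
    case False
    hence "a < 0" using \<open>a \<noteq> 0\<close> by simp
    hence "t < 0" unfolding t_def using pos by (simp add: divide_neg_pos)
    moreover have "a + b * t < 0" unfolding e2 by (rule mult_neg_pos[OF \<open>a < 0\<close> q])
    ultimately show ?thesis by (simp add: mult_neg_neg)
  qed
  thus False using assms[of t] e1 by simp
qed

lemma rayleigh:
  fixes H :: "complex^'n^'n"
  assumes herm: "hermitian H" and one: "ONE H U"
    and W_def: "W = {x. \<forall>u\<in>U. cd u x = 0}" and w: "w \<in> W" "w \<noteq> 0"
  shows "\<exists>w0\<in>W. norm w0 = 1 \<and> (\<exists>\<mu>. H *v w0 = \<mu> *s w0)"
proof -
  have clW: "closed W"
  proof -
    have "W = (\<Inter>u\<in>U. {x. cd u x = 0})" unfolding W_def by auto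
    moreover have "\<forall>u\<in>U. closed {x. cd u x = 0}"
      by (intro ballI closed_Collect_eq) (auto intro: cont_cd continuous_intros)
    ultimately show ?thesis by (simp only: closed_INT)
  qed
  have Wsc: "c *\<^sub>R x \<in> W" if "x \<in> W" for c x using that unfolding W_def
    by (simp add: cd_scaleR_right)
  have Wadd: "x + y \<in> W" if "x \<in> W" "y \<in> W" for x y using that unfolding W_def
    by (simp add: cd_add_right)
  define K where "K = W \<inter> sphere 0 1"
  have cK: "compact K" unfolding K_def using clW compact_sphere
    by (rule closed_Int_compact)
  have "w /\<^sub>R norm w \<in> K" unfolding K_def using w Wsc by auto
  hence Kne: "K \<noteq> {}" by auto
  define f where "f x = inner x (H *v x)" for x
  have cf: "continuous_on K f" unfolding f_def
    by (intro continuous_intros cont_mv)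
  obtain w0 where w0K: "w0 \<in> K" and max: "\<And>y. y \<in> K \<Longrightarrow> f y \<le> f w0"
    using continuous_attains_sup[OF cK Kne cf] by blast
  have w0W: "w0 \<in> W" and nw0: "norm w0 = 1" using w0K unfolding K_def by auto
  define \<mu> where "\<mu> = f w0"
  have fsc: "f (c *\<^sub>R x) = c^2 * f x" for c x
    unfolding f_def by (simp add: mv_scaleR power2_eq_square)
  have ineq: "f z \<le> \<mu> * (norm z)^2" if "z \<in> W" for z
  proof (cases "z = 0")
    case True thus ?thesis by (simp add: f_def)
  next
    case False
    have "z /\<^sub>R norm z \<in> K" unfolding K_def using that Wsc False by auto
    hence "f (z /\<^sub>R norm z) \<le> \<mu>" using max \<mu>_def by auto
    hence "f z / (norm z)^2 \<le> \<mu>" using fsc[of "inverse (norm z)" z]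
      by (simp add: power_inverse divide_inverse mult.commute)
    thus ?thesis using False by (simp add: field_simps)
  qed
  have hinner: "inner x (H *v y) = inner (H *v x) y" for x y
    using herm_cd[OF herm, of x y] by (metis Re_cd)
  have key: "inner y (H *v w0 - \<mu> *\<^sub>R w0) = 0" if yW: "y \<in> W" for y
  proof -
    have "(2 * inner y (H *v w0) - 2 * \<mu> * inner y w0) * t + (f y - \<mu> * (norm y)^2) * t^2 \<le> 0" for t
    proof -
      have "w0 + t *\<^sub>R y \<in> W" using w0W yW Wsc Wadd by auto
      hence A: "f (w0 + t *\<^sub>R y) \<le> \<mu> * (norm (w0 + t *\<^sub>R y))^2" by (rule ineq)
      have B: "f (w0 + t *\<^sub>R y) = \<mu> + 2 * t * inner y (H *v w0) + t^2 * f y"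
        unfolding f_def \<mu>_def
        by (simp add: matrix_vector_right_distrib mv_scaleR inner_add_left inner_add_right
            hinner[of w0 y] inner_commute[of "H *v w0" y] power2_eq_square algebra_simps)
      have C: "(norm (w0 + t *\<^sub>R y))^2 = 1 + 2 * t * inner y w0 + t^2 * (norm y)^2"
      proof -
        have ww: "inner w0 w0 = 1" using nw0 by (simp add: dot_square_norm)
        show ?thesis unfolding power2_norm_eq_inner using ww
          by (simp add: inner_add_left inner_add_right inner_commute[of w0 y] algebra_simps power2_eq_square)
      qed
      show ?thesis using A B C by (simp add: algebra_simps power2_eq_square)
    qed
    hence "2 * inner y (H *v w0) - 2 * \<mu> * inner y w0 = 0" by (rule quad_zero)
    thus ?thesis by (simp add: inner_diff_right)
  qed
  define z where "z = H *v w0 - \<mu> *\<^sub>R w0"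
  have zW: "z \<in> W" unfolding W_def z_def
  proof (intro CollectI ballI)
    fix u assume uU: "u \<in> U"
    then obtain lm where lam: "H *v u = lm *s u" using one unfolding ONE_def by blast
    have "cd u (H *v w0) = cd (H *v u) w0" using herm_cd[OF herm] .
    also have "\<dots> = 0" using lam w0W uU unfolding W_def by (simp add: cd_smult_left)
    finally show "cd u (H *v w0 - \<mu> *\<^sub>R w0) = 0"
      using w0W uU unfolding W_def by (simp add: cd_diff_right cd_scaleR_right)
  qed
  have "inner z z = 0" using key[OF zW] unfolding z_def .
  hence "z = 0" by simp
  hence "H *v w0 = (of_real \<mu>) *s w0" unfolding z_def by (simp add: scaleR_smult)
  thus ?thesis using w0W nw0 by blast
qed




lemma cd_unit: "norm u = 1 \<Longrightarrow> cd u u = 1"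
  by (simp add: cd_self)

lemma ONE_expand:
  assumes one: "ONE H U" and fin: "finite U" and u': "u' \<in> U"
  shows "(\<Sum>u\<in>U. f u * cd u' u) = f u'"
proof -
  have "(\<Sum>u\<in>U. f u * cd u' u) = f u' * cd u' u' + (\<Sum>u\<in>U - {u'}. f u * cd u' u)"
    using fin u' by (simp add: sum.remove)
  also have "(\<Sum>u\<in>U - {u'}. f u * cd u' u) = 0"
    using one u' unfolding ONE_def by (intro sum.neutral) auto
  also have "cd u' u' = 1" using one u' unfolding ONE_def by (simp add: cd_unit)
  finally show ?thesis by simp
qed

lemma spectral:
  fixes H :: "complex^'n^'n"
  assumes herm: "hermitian H"
  shows "\<exists>U. ONE H U \<and> finite U \<and> (\<forall>v. v = (\<Sum>u\<in>U. cd u v *s u))"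
proof -
  define P where "P k \<longleftrightarrow> (\<exists>U. ONE H U \<and> card U = k)" for k
  have P0: "P 0" unfolding P_def by (rule exI[of _ "{}"]) (simp add: ONE_def)
  have bnd: "\<forall>y. P y \<longrightarrow> y \<le> DIM(complex^'n)" unfolding P_def using ONE_bound by blast
  obtain k where Pk: "P k" and maxk: "\<And>y. P y \<Longrightarrow> y \<le> k"
    using Nat.ex_has_greatest_nat[OF P0 bnd] by blast
  obtain U where one: "ONE H U" and cU: "card U = k" using Pk unfolding P_def by blast
  have fin: "finite U" using ONE_bound[OF one] by blast
  define W where "W = {x. \<forall>u\<in>U. cd u x = 0}"
  have W0: "w = 0" if wW: "w \<in> W" for w
  proof (rule ccontr)
    assume "w \<noteq> 0"
    then obtain w0 where w0W: "w0 \<in> W" and nw0: "norm w0 = 1" and ev0: "\<exists>\<mu>. H *v w0 = \<mu> *s w0"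
      using rayleigh[OF herm one W_def wW \<open>w \<noteq> 0\<close>] by blast
    have notin: "w0 \<notin> U"
    proof
      assume "w0 \<in> U"
      hence "cd w0 w0 = 0" using w0W unfolding W_def by blast
      thus False using cd_unit[OF nw0] by simp
    qed
    have "ONE H (insert w0 U)" unfolding ONE_def
    proof (rule conjI; intro ballI impI)
      fix u assume "u \<in> insert w0 U"
      thus "norm u = 1 \<and> (\<exists>\<mu>. H *v u = \<mu> *s u)" using one nw0 ev0 unfolding ONE_def by auto
    next
      fix u v assume uv: "u \<in> insert w0 U" "v \<in> insert w0 U" "u \<noteq> v"
      show "cd u v = 0"
      proof (cases "u = w0")
        case True
        hence "v \<in> U" using uv by auto
        hence "cd v w0 = 0" using w0W unfolding W_def by blast
        thus ?thesis using True by (metis cd_cnj complex_cnj_zero)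
      next
        case False
        hence uU: "u \<in> U" using uv by auto
        show ?thesis
        proof (cases "v = w0")
          case True thus ?thesis using uU w0W unfolding W_def by blast
        next
          case False thus ?thesis using uU uv one unfolding ONE_def by auto
        qed
      qed
    qed
    hence "P (Suc k)" unfolding P_def using fin notin cU by (intro exI[of _ "insert w0 U"]) simp
    thus False using maxk by fastforce
  qed
  have "v = (\<Sum>u\<in>U. cd u v *s u)" for v
  proof -
    define z where "z = v - (\<Sum>u\<in>U. cd u v *s u)"
    have "z \<in> W" unfolding W_def
    proof (intro CollectI ballI)
      fix u' assume u': "u' \<in> U"
      have "cd u' z = cd u' v - (\<Sum>u\<in>U. cd u v * cd u' u)"
        unfolding z_def by (simp add: cd_diff_right cd_sum_right cd_smult_right)
      also have "\<dots> = 0" using ONE_expand[OF one fin u'] by simp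
      finally show "cd u' z = 0" .
    qed
    hence "z = 0" by (rule W0)
    thus ?thesis unfolding z_def by simp
  qed
  thus ?thesis using one fin by blast
qed




lemma sum_vec_component: "(\<Sum>u\<in>U. f u) $ i = (\<Sum>u\<in>U. (f u) $ i)"
  by (induction U rule: infinite_finite_induct) auto

lemma mm_diff_left: "(A::complex^'n^'n) ** (B - C) = A ** B - A ** C"
  by (simp add: matrix_matrix_mult_def vec_eq_iff sum_subtractf algebra_simps)
lemma mm_diff_right: "((A::complex^'n^'n) - B) ** C = A ** C - B ** C"
  by (simp add: matrix_matrix_mult_def vec_eq_iff sum_subtractf algebra_simps)
lemma mm_add_right: "((A::complex^'n^'n) + B) ** C = A ** C + B ** C"
  by (simp add: matrix_matrix_mult_def vec_eq_iff sum.distrib algebra_simps)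

lemma ONE_single:
  assumes one: "ONE H U" and fin: "finite U" and u': "u' \<in> U"
  shows "(\<Sum>u\<in>U. (g u * cd u u') *s u) = g u' *s u'"
proof -
  have "(\<Sum>u\<in>U. (g u * cd u u') *s u) = (g u' * cd u' u') *s u' + (\<Sum>u\<in>U - {u'}. (g u * cd u u') *s u)"
    using fin u' by (simp add: sum.remove)
  also have "(\<Sum>u\<in>U - {u'}. (g u * cd u u') *s u) = 0"
    using one u' unfolding ONE_def by (intro sum.neutral) auto
  also have "cd u' u' = 1" using one u' unfolding ONE_def by (simp add: cd_unit)
  finally show ?thesis by simp
qed

lemma sqrt_exists:
  fixes H :: "complex^'n^'n"
  assumes pd: "herm_pos_def H"
  shows "\<exists>R. herm_pos_def R \<and> R ** R = H"
proof -
  have herm: "hermitian H" using pd unfolding herm_pos_def_def by blast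
  obtain U where one: "ONE H U" and fin: "finite U" and exp: "\<And>v. v = (\<Sum>u\<in>U. cd u v *s u)"
    using spectral[OF herm] by blast
  define e where "e u = Re (cd u (H *v u))" for u
  have eig: "H *v u = of_real (e u) *s u" and epos: "e u > 0" if uU: "u \<in> U" for u
  proof -
    obtain m where m: "H *v u = m *s u" and nu: "norm u = 1" using one uU unfolding ONE_def by blast
    have "cd u (H *v u) = m" using m nu by (simp add: cd_smult_right cd_unit)
    moreover have "cnj (cd u (H *v u)) = cd u (H *v u)" using qform_herm_real[OF herm] by (simp add: qform_cd)
    ultimately have "cnj m = m" by simp
    hence "m \<in> \<real>" by (simp add: Reals_cnj_iff)
    hence "of_real (Re m) = m" by (rule of_real_Re)
    hence "m = of_real (e u)" unfolding e_def using \<open>cd u (H *v u) = m\<close> by simp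
    thus "H *v u = of_real (e u) *s u" using m by simp
    have "u \<noteq> 0" using nu by auto
    thus "e u > 0" using pd unfolding herm_pos_def_def e_def by (simp add: qform_cd)
  qed
  define s where "s u = (of_real (sqrt (e u)) :: complex)" for u
  define R :: "complex^'n^'n" where "R = (\<chi> i j. \<Sum>u\<in>U. s u * u$i * cnj (u$j))"
  have Rmv: "R *v v = (\<Sum>u\<in>U. (s u * cd u v) *s u)" for v
    unfolding R_def
    by (simp add: vec_eq_iff matrix_vector_mult_def sum_vec_component cd_def sum_distrib_left
        sum_distrib_right mult_ac) (subst sum.swap, simp add: mult_ac)
  have Ru: "R *v u = s u *s u" if "u \<in> U" for u
    using ONE_single[OF one fin that, of s] by (simp add: Rmv)
  have ss: "s u * s u = of_real (e u)" if "u \<in> U" for u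
    using epos[OF that] unfolding s_def by (simp flip: of_real_mult)
  have RR: "R ** R = H"
  proof (subst matrix_eq, intro allI)
    fix v
    have "(R ** R) *v v = R *v (R *v v)" by (simp add: matrix_vector_mul_assoc)
    also have "\<dots> = (\<Sum>u\<in>U. (s u * cd u v) *s (R *v u))" by (simp add: Rmv mv_sum mv_smult)
    also have "\<dots> = (\<Sum>u\<in>U. (of_real (e u) * cd u v) *s u)"
      by (intro sum.cong refl) (simp add: Ru ss vector_smult_assoc mult_ac)
    also have "\<dots> = (\<Sum>u\<in>U. cd u v *s (H *v u))"
      by (intro sum.cong refl) (simp add: eig vector_smult_assoc mult_ac)
    also have "\<dots> = H *v v" by (subst (2) exp[of v]) (simp add: mv_sum mv_smult)
    finally show "(R ** R) *v v = H *v v" .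
  qed
  have hR: "hermitian R" unfolding hermitian_def cmat_adj_def R_def s_def
    by (simp add: vec_eq_iff cnj_sum mult_ac)
  have qR: "qform R x = of_real (\<Sum>u\<in>U. sqrt (e u) * (cmod (cd u x))^2)" for x
  proof -
    have "qform R x = (\<Sum>u\<in>U. s u * cd u x * cd x u)"
      by (simp add: qform_cd Rmv cd_sum_right cd_smult_right)
    also have "\<dots> = (\<Sum>u\<in>U. of_real (sqrt (e u) * (cmod (cd u x))^2))"
    proof (intro sum.cong refl)
      fix u
      have "s u * cd u x * cd x u = of_real (sqrt (e u)) * (cd u x * cnj (cd u x))"
        by (simp add: s_def cd_cnj mult.assoc)
      also have "cd u x * cnj (cd u x) = of_real ((cmod (cd u x))^2)" by (rule complex_norm_square[symmetric])
      finally show "s u * cd u x * cd x u = of_real (sqrt (e u) * (cmod (cd u x))^2)" by simp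
    qed
    finally show ?thesis by simp
  qed
  have "herm_pos_def R" unfolding herm_pos_def_def
  proof (intro conjI hR allI impI)
    fix x :: "complex^'n" assume "x \<noteq> 0"
    show "qform R x \<in> \<real>" by (simp add: qR)
    have "\<exists>u\<in>U. cd u x \<noteq> 0"
    proof (rule ccontr)
      assume "\<not> ?thesis"
      hence "x = 0" using exp[of x] by simp
      thus False using \<open>x \<noteq> 0\<close> by simp
    qed
    then obtain u where uU: "u \<in> U" and nz: "cd u x \<noteq> 0" by blast
    have pos: "0 < sqrt (e u) * (cmod (cd u x))^2" using epos[OF uU] nz by simp
    have nn: "0 \<le> sqrt (e u') * (cmod (cd u' x))^2" if "u' \<in> U" for u'
      using epos[OF that] by simp
    have "0 < (\<Sum>u\<in>U. sqrt (e u) * (cmod (cd u x))^2)"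
      using sum_pos2[OF fin uU, of "\<lambda>u. sqrt (e u) * (cmod (cd u x))^2"] pos nn by blast
    thus "0 < Re (qform R x)" by (simp add: qR)
  qed
  thus ?thesis using RR by blast
qed

definition mtr :: "complex^'n^'n \<Rightarrow> complex" where "mtr M = (\<Sum>j\<in>UNIV. M$j$j)"
definition mcol :: "'n \<Rightarrow> complex^'n^'n \<Rightarrow> complex^'n" where "mcol j M = (\<chi> k. M$k$j)"

lemma mtr_comm: "mtr (A ** B) = mtr (B ** A)"
  unfolding mtr_def matrix_matrix_mult_def by (simp, subst sum.swap, simp add: mult.commute)
lemma mtr_add: "mtr (A + B) = mtr A + mtr B"
  by (simp add: mtr_def sum.distrib)

lemma mtr_qform:
  assumes "hermitian D"
  shows "mtr (D ** M ** D) = (\<Sum>j\<in>UNIV. qform M (mcol j D))"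
proof -
  have Dc: "cnj (D$k$j) = D$j$k" for j k
    using assms unfolding hermitian_def cmat_adj_def by (metis vec_lambda_beta)
  show ?thesis unfolding mtr_def qform_def matrix_matrix_mult_def matrix_vector_mult_def mcol_def
    by (simp add: Dc sum_distrib_left sum_distrib_right mult_ac) (subst sum.swap, simp add: mult_ac)
qed




lemma mm_zero_right[simp]: "(D::complex^'n^'n) ** 0 = 0"
  by (simp add: matrix_matrix_mult_def vec_eq_iff)

lemma qform_zero[simp]: "qform M 0 = 0"
  by (simp add: qform_cd)

lemma hpd_nonneg: "herm_pos_def R \<Longrightarrow> 0 \<le> Re (qform R x)"
  unfolding herm_pos_def_def by (cases "x = 0") (auto intro: less_imp_le)

lemma sqrt_unique:
  fixes R1 R2 :: "complex^'n^'n"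
  assumes p1: "herm_pos_def R1" and p2: "herm_pos_def R2" and eq: "R1 ** R1 = R2 ** R2"
  shows "R1 = R2"
proof -
  have h1: "hermitian R1" and h2: "hermitian R2" using p1 p2 unfolding herm_pos_def_def by auto
  define D where "D = R1 - R2"
  have hD: "hermitian D" using h1 h2 unfolding D_def hermitian_def by (simp add: adj_diff)
  have Z: "R1 ** D + D ** R2 = 0"
    unfolding D_def mm_diff_left mm_diff_right using eq by simp
  have "mtr (D ** (R1 ** D + D ** R2)) = mtr (D ** R1 ** D) + mtr (D ** R2 ** D)"
  proof -
    have "mtr (D ** (D ** R2)) = mtr (D ** R2 ** D)" by (rule mtr_comm)
    thus ?thesis by (simp add: matrix_add_ldistrib mtr_add matrix_mul_assoc)
  qed
  moreover have "mtr (D ** (R1 ** D + D ** R2)) = 0" unfolding Z by (simp add: mtr_def)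
  ultimately have "mtr (D ** R1 ** D) + mtr (D ** R2 ** D) = 0" by simp
  hence "(\<Sum>j\<in>UNIV. qform R1 (mcol j D)) + (\<Sum>j\<in>UNIV. qform R2 (mcol j D)) = 0"
    by (simp only: mtr_qform[OF hD])
  hence "(\<Sum>j\<in>UNIV. Re (qform R1 (mcol j D)) + Re (qform R2 (mcol j D))) = 0"
    by (simp add: sum.distrib flip: Re_sum plus_complex.sel(1))
  hence "\<forall>j\<in>UNIV. Re (qform R1 (mcol j D)) + Re (qform R2 (mcol j D)) = 0"
    by (subst (asm) sum_nonneg_eq_0_iff) (auto intro: add_nonneg_nonneg hpd_nonneg p1 p2)
  note all = this
  have "Re (qform R1 (mcol j D)) = 0" for j
  proof -
    have "Re (qform R1 (mcol j D)) + Re (qform R2 (mcol j D)) = 0" using all by blast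
    thus ?thesis using hpd_nonneg[OF p1, of "mcol j D"] hpd_nonneg[OF p2, of "mcol j D"] by linarith
  qed
  hence "mcol j D = 0" for j
    using p1 unfolding herm_pos_def_def by (metis less_irrefl)
  hence "D = 0" unfolding mcol_def by (simp add: vec_eq_iff)
  thus ?thesis unfolding D_def by simp
qed

lemma hpd_sqrt_props:
  fixes S :: "complex^'n^'n"
  assumes "herm_pos_def S"
  shows "herm_pos_def (hpd_sqrt S)" "hpd_sqrt S ** hpd_sqrt S = S"
proof -
  have "\<exists>!R. herm_pos_def R \<and> R ** R = S"
    using sqrt_exists[OF assms] sqrt_unique by metis
  hence "herm_pos_def (hpd_sqrt S) \<and> hpd_sqrt S ** hpd_sqrt S = S"
    unfolding hpd_sqrt_def by (rule theI')
  thus "herm_pos_def (hpd_sqrt S)" "hpd_sqrt S ** hpd_sqrt S = S" by auto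
qed




definition psd' :: "complex^'n^'n \<Rightarrow> bool" where
  "psd' P \<longleftrightarrow> (\<forall>x. 0 \<le> Re (qform (P + cmat_adj P) x))"

lemma norm_sq_cd: "(norm x)^2 = Re (cd x x)"
  by (simp add: Re_cd_self)

lemma qform_add: "qform (M + N) x = qform M x + qform N x"
  by (simp add: qform_cd matrix_vector_mult_add_rdistrib cd_add_right)

lemma qform_PP: "Re (qform (P + cmat_adj P) x) = 2 * Re (cd x (P *v x))"
proof -
  have "qform (P + cmat_adj P) x = cd x (P *v x) + cd (P *v x) x"
    unfolding qform_add by (simp add: qform_cd cd_adj)
  also have "cd (P *v x) x = cnj (cd x (P *v x))" by (simp add: cd_cnj)
  finally show ?thesis by simp
qed

lemma qform_IPP: "Re (qform (mat 1 + cmat_adj P ** P) x) = (norm x)^2 + (norm (P *v x))^2"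
proof -
  have "qform (mat 1 + cmat_adj P ** P) x = cd x x + cd (P *v x) (P *v x)"
    unfolding qform_add by (simp add: qform_cd cd_adj flip: matrix_vector_mul_assoc)
  thus ?thesis by (simp add: norm_sq_cd)
qed

lemma norm_IpP: "(norm ((mat 1 + P) *v x))^2 = (norm x)^2 + (norm (P *v x))^2 + Re (qform (P + cmat_adj P) x)"
proof -
  have "cd (x + P *v x) (x + P *v x) = cd x x + cd x (P *v x) + cd (P *v x) x + cd (P *v x) (P *v x)"
    by (simp add: cd_add_left cd_add_right)
  moreover have "Re (cd (P *v x) x) = Re (cd x (P *v x))"
  proof -
    have "cd (P *v x) x = cnj (cd x (P *v x))" by (simp add: cd_cnj)
    thus ?thesis by simp
  qed
  ultimately show ?thesis
    by (simp add: matrix_vector_mult_add_rdistrib norm_sq_cd qform_PP)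
qed

lemma norm_ImP: "(norm ((mat 1 - P) *v x))^2 = (norm x)^2 + (norm (P *v x))^2 - Re (qform (P + cmat_adj P) x)"
proof -
  have "cd (x - P *v x) (x - P *v x) = cd x x - cd x (P *v x) - cd (P *v x) x + cd (P *v x) (P *v x)"
    by (simp add: cd_diff_left cd_diff_right)
  moreover have "Re (cd (P *v x) x) = Re (cd x (P *v x))"
  proof -
    have "cd (P *v x) x = cnj (cd x (P *v x))" by (simp add: cd_cnj)
    thus ?thesis by simp
  qed
  ultimately show ?thesis
    by (simp add: matrix_vector_mult_diff_rdistrib norm_sq_cd qform_PP)
qed

lemma mfun_eq: "mfun Q P x = fP Q * (norm ((mat 1 - P) *v x) / norm ((mat 1 + P) *v x))"
proof -
  have "sqrt ((norm ((mat 1 - P) *v x))^2 / (norm ((mat 1 + P) *v x))^2)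
        = norm ((mat 1 - P) *v x) / norm ((mat 1 + P) *v x)"
    by (simp add: real_sqrt_divide)
  thus ?thesis unfolding mfun_def qform_IPP norm_IpP norm_ImP by simp
qed

lemma psd'_inj:
  assumes "psd' P" "(mat 1 + P) *v x = 0" shows "x = 0"
proof -
  have "(norm x)^2 + (norm (P *v x))^2 + Re (qform (P + cmat_adj P) x) = 0"
    using norm_IpP[of P x] assms(2) by simp
  moreover have "0 \<le> Re (qform (P + cmat_adj P) x)" using assms(1) unfolding psd'_def by blast
  ultimately have "(norm x)^2 = 0"
    using zero_le_power2[of "norm x"] zero_le_power2[of "norm (P *v x)"] by linarith
  thus ?thesis by simp
qed

lemma psd'_inv: "psd' P \<Longrightarrow> invertible (mat 1 + P)"
  by (rule invertible_ker) (rule psd'_inj)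

lemma psd'_le: "psd' P \<Longrightarrow> norm ((mat 1 - P) *v x) \<le> norm ((mat 1 + P) *v x)"
proof -
  assume "psd' P"
  hence "0 \<le> Re (qform (P + cmat_adj P) x)" unfolding psd'_def by blast
  hence "(norm ((mat 1 - P) *v x))^2 \<le> (norm ((mat 1 + P) *v x))^2"
    unfolding norm_IpP norm_ImP by simp
  thus ?thesis by (simp add: power2_le_iff_abs_le)
qed

lemma bl_mv: "bounded_linear (\<lambda>x. (A::complex^'n^'n) *v x)"
  using matrix_vector_mul_linear linear_conv_bounded_linear by blast

lemma onorm_mv: "norm (A *v x) \<le> spec_norm A * norm (x::complex^'n)"
  unfolding spec_norm_def by (rule onorm[OF bl_mv])

lemma IpP_ImP_comm: "(mat 1 - P) *v ((mat 1 + P) *v y) = (mat 1 + P) *v ((mat 1 - P) *v (y::complex^'n))"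
  by (simp add: matrix_vector_mult_add_rdistrib matrix_vector_mult_diff_rdistrib
      matrix_vector_right_distrib matrix_vector_mult_diff_distrib)

lemma fP_bounds:
  fixes P :: "complex^'n^'n"
  assumes "psd' P" shows "0 \<le> fP P" "fP P \<le> 1"
proof -
  show "0 \<le> fP P" unfolding fP_def spec_norm_def by (rule onorm_pos_le[OF bl_mv])
  have inv: "invertible (mat 1 + P)" using psd'_inv[OF assms] .
  show "fP P \<le> 1" unfolding fP_def spec_norm_def
  proof (rule onorm_le)
    fix x :: "complex^'n"
    define y where "y = matrix_inv (mat 1 + P) *v x"
    have xy: "x = (mat 1 + P) *v y" unfolding y_def using minv_mult_vec(2)[OF inv] by simp
    have "(matrix_inv (mat 1 + P) ** (mat 1 - P)) *v x = matrix_inv (mat 1 + P) *v ((mat 1 - P) *v x)"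
      by (simp add: matrix_vector_mul_assoc)
    also have "\<dots> = (mat 1 - P) *v y" unfolding xy IpP_ImP_comm using minv_mult_vec(1)[OF inv] by simp
    finally have "norm ((matrix_inv (mat 1 + P) ** (mat 1 - P)) *v x) \<le> norm x"
      using psd'_le[OF assms, of y] xy by simp
    thus "norm ((matrix_inv (mat 1 + P) ** (mat 1 - P)) *v x) \<le> 1 * norm x" by simp
  qed
qed

lemma norm_smult: "norm (c *s (x::complex^'n)) = cmod c * norm x"
proof -
  have e1: "cd (c *s x) (c *s x) = (c * cnj c) * cd x x" by (simp add: cd_smult_left cd_smult_right mult_ac)
  have e2: "c * cnj c = of_real ((cmod c)^2)" by (rule complex_norm_square[symmetric])
  have "cd (c *s x) (c *s x) = of_real ((cmod c)^2 * (norm x)^2)" unfolding e1 e2 cd_self[of x] by simp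
  hence "(norm (c *s x))^2 = (cmod c)^2 * (norm x)^2"
    by (simp only: norm_sq_cd Re_complex_of_real)
  also have "\<dots> = (cmod c * norm x)^2" by (simp add: power_mult_distrib)
  finally show ?thesis by (simp add: power2_eq_iff_nonneg)
qed




lemma bound_lemma:
  fixes P Q :: "complex^'n^'n"
  assumes pP: "psd' P" and pQ: "psd' Q" and x0: "x \<noteq> 0"
    and eq: "(mat 1 - Q) *v ((mat 1 - P) *v x) = l *s ((mat 1 + Q) *v ((mat 1 + P) *v x))"
  shows "cmod l \<le> mfun Q P x"
proof -
  have invQ: "invertible (mat 1 + Q)" by (rule psd'_inv[OF pQ])
  define K where "K = matrix_inv (mat 1 + Q) ** (mat 1 - Q)"
  have "K *v ((mat 1 - P) *v x) = matrix_inv (mat 1 + Q) *v ((mat 1 - Q) *v ((mat 1 - P) *v x))"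
    unfolding K_def by (simp only: matrix_vector_mul_assoc[symmetric])
  also have "\<dots> = l *s ((mat 1 + P) *v x)"
    unfolding eq mv_smult minv_mult_vec(1)[OF invQ] ..
  finally have Kx: "K *v ((mat 1 - P) *v x) = l *s ((mat 1 + P) *v x)" .
  have "cmod l * norm ((mat 1 + P) *v x) = norm (K *v ((mat 1 - P) *v x))"
    unfolding Kx norm_smult ..
  also have "\<dots> \<le> fP Q * norm ((mat 1 - P) *v x)"
    unfolding fP_def K_def[symmetric] by (rule onorm_mv)
  finally have ineq: "cmod l * norm ((mat 1 + P) *v x) \<le> fP Q * norm ((mat 1 - P) *v x)" .
  have "(mat 1 + P) *v x \<noteq> 0" using psd'_inj[OF pP] x0 by blast
  hence npos: "norm ((mat 1 + P) *v x) > 0" by simp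
  have "cmod l \<le> fP Q * norm ((mat 1 - P) *v x) / norm ((mat 1 + P) *v x)"
    using ineq npos by (simp add: pos_le_divide_eq)
  thus ?thesis unfolding mfun_eq by simp
qed

lemma lt1_lemma:
  fixes P Q :: "complex^'n^'n"
  assumes pP: "psd' P" and pQ: "psd' Q" and b: "0 < Re (qform (P + cmat_adj P) x)"
  shows "mfun Q P x < 1"
proof -
  have "(norm ((mat 1 - P) *v x))^2 < (norm ((mat 1 + P) *v x))^2"
    unfolding norm_IpP norm_ImP using b by simp
  hence lt: "norm ((mat 1 - P) *v x) < norm ((mat 1 + P) *v x)"
    by (simp add: power2_less_imp_less)
  have npos: "norm ((mat 1 + P) *v x) > 0" using lt norm_ge_zero[of "(mat 1 - P) *v x"] by linarith
  define r where "r = norm ((mat 1 - P) *v x) / norm ((mat 1 + P) *v x)"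
  have r1: "r < 1" unfolding r_def using lt npos by simp
  have r0: "0 \<le> r" unfolding r_def by simp
  have "fP Q * r \<le> 1 * r" using fP_bounds(2)[OF pQ] r0 by (intro mult_right_mono) auto
  thus ?thesis unfolding mfun_eq r_def[symmetric] using r1 by simp
qed

lemma swap_lemma:
  fixes A B :: "complex^'n^'n"
  assumes "A *v (B *v x) = B *v (A *v x)"
  shows "(mat 1 - A) *v ((mat 1 - B) *v x) = (mat 1 - B) *v ((mat 1 - A) *v x)"
    "(mat 1 + A) *v ((mat 1 + B) *v x) = (mat 1 + B) *v ((mat 1 + A) *v x)"
  using assms by (simp_all add: matrix_vector_mult_add_rdistrib matrix_vector_mult_diff_rdistrib
      matrix_vector_right_distrib matrix_vector_mult_diff_distrib algebra_simps)

lemma mfun_scale: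
  assumes "c > 0" shows "mfun Q P (c *\<^sub>R x) = mfun Q P x"
proof -
  have "norm ((mat 1 - P) *v (c *\<^sub>R x)) / norm ((mat 1 + P) *v (c *\<^sub>R x))
      = norm ((mat 1 - P) *v x) / norm ((mat 1 + P) *v x)"
    using assms by (simp add: mv_scaleR)
  thus ?thesis unfolding mfun_eq by simp
qed




lemma core:
  fixes A P1 P2 \<Sigma> R S Q1 Q2 Pp Pm T G :: "complex^'n^'n" and g :: "complex^'n \<Rightarrow> real"
  assumes pdA: "pos_def A" and AP: "A = P1 + P2" and s1: "pos_semidef P1" and s2: "pos_semidef P2"
    and hS: "herm_pos_def \<Sigma>"
    and Rd: "R = hpd_sqrt \<Sigma>" and Sd: "S = matrix_inv R"
    and Q1d: "Q1 = S ** P1 ** S" and Q2d: "Q2 = S ** P2 ** S"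
    and Ppd: "Pp = (mat 1 + Q2) ** (mat 1 + Q1)" and Pmd: "Pm = (mat 1 - Q2) ** (mat 1 - Q1)"
    and Td: "T = matrix_inv Pp ** Pm"
    and Gd: "G = matrix_inv (\<Sigma> + P1) ** (\<Sigma> - P2) ** matrix_inv (\<Sigma> + P2) ** (\<Sigma> - P1)"
    and gd: "g = (\<lambda>x. min (mfun Q2 Q1 x) (mfun Q1 Q2 x))"
    and comm: "\<And>x. x \<in> ev T \<Longrightarrow> Q1 ** Q2 *v x = Q2 ** Q1 *v x"
  shows "\<exists>x0\<in>ev T. (\<forall>x\<in>ev T. g x \<le> g x0) \<and> spec_radius G \<le> g x0 \<and> g x0 < 1"
proof -
  have hR: "herm_pos_def R" and RR: "R ** R = \<Sigma>" using hpd_sqrt_props[OF hS] Rd by auto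
  have hermR: "hermitian R" using hR unfolding herm_pos_def_def by blast
  have Rinj: "x = 0" if "R *v x = 0" for x
  proof (rule ccontr)
    assume "x \<noteq> 0"
    hence "0 < Re (qform R x)" using hR unfolding herm_pos_def_def by blast
    thus False using that by (simp add: qform_cd)
  qed
  have invR: "invertible R" using Rinj by (rule invertible_ker)
  have SRv: "S *v (R *v v) = v" and RSv: "R *v (S *v v) = v" for v
    unfolding Sd using minv_mult_vec[OF invR] by auto
  have hermS: "hermitian S" unfolding hermitian_def Sd adj_inv[OF invR]
    using hermR unfolding hermitian_def by simp
  have Rcancel: "a = b" if "R *v a = R *v b" for a b using SRv that by metis
  have qS: "qform (S ** M ** S) x = qform M (S *v x)" for M x
    by (simp add: qform_cd herm_cd[OF hermS] flip: matrix_vector_mul_assoc)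
  have adjS: "cmat_adj (S ** M ** S) = S ** cmat_adj M ** S" for M
    using hermS unfolding hermitian_def by (simp add: adj_mult matrix_mul_assoc)
  have QQ: "S ** M ** S + cmat_adj (S ** M ** S) = S ** (M + cmat_adj M) ** S" for M
    unfolding adjS by (simp add: matrix_add_ldistrib mm_add_right)
  have psdP: "0 \<le> Re (qform (P + cmat_adj P) x)" if "pos_semidef P" for P x
    using that unfolding pos_semidef_def herm_pos_semidef_def by blast
  have pQ1: "psd' Q1" unfolding psd'_def Q1d QQ qS using psdP[OF s1] by blast
  have pQ2: "psd' Q2" unfolding psd'_def Q2d QQ qS using psdP[OF s2] by blast
  have Q1v: "Q1 *v v = S *v (P1 *v (S *v v))" and Q2v: "Q2 *v v = S *v (P2 *v (S *v v))" for v
    unfolding Q1d Q2d by (simp_all only: matrix_vector_mul_assoc[symmetric])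
  have Ppv: "Pp *v v = (mat 1 + Q2) *v ((mat 1 + Q1) *v v)" and
       Pmv: "Pm *v v = (mat 1 - Q2) *v ((mat 1 - Q1) *v v)" for v
    unfolding Ppd Pmd by (simp_all add: matrix_vector_mul_assoc)
  have invPp: "invertible Pp"
  proof (rule invertible_ker)
    fix x assume "Pp *v x = 0"
    hence "(mat 1 + Q1) *v x = 0" unfolding Ppv using psd'_inj[OF pQ2] by blast
    thus "x = 0" using psd'_inj[OF pQ1] by blast
  qed
  have Tv: "T *v x = l *s x \<longleftrightarrow> Pm *v x = l *s (Pp *v x)" for x l
  proof
    assume "T *v x = l *s x"
    hence "Pp *v (T *v x) = l *s (Pp *v x)" by (simp add: mv_smult)
    moreover have "Pp *v (T *v x) = Pm *v x" unfolding Td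
      by (simp only: matrix_vector_mul_assoc[symmetric] minv_mult_vec(2)[OF invPp])
    ultimately show "Pm *v x = l *s (Pp *v x)" by simp
  next
    assume "Pm *v x = l *s (Pp *v x)"
    hence "T *v x = matrix_inv Pp *v (l *s (Pp *v x))" unfolding Td
      by (simp only: matrix_vector_mul_assoc[symmetric])
    thus "T *v x = l *s x" by (simp add: mv_smult minv_mult_vec(1)[OF invPp])
  qed
  have eigb: "cmod l \<le> g x" if xev: "x \<in> ev T" and Tx: "T *v x = l *s x" for x l
  proof -
    have x0: "x \<noteq> 0" using xev unfolding ev_def by blast
    have e1: "(mat 1 - Q2) *v ((mat 1 - Q1) *v x) = l *s ((mat 1 + Q2) *v ((mat 1 + Q1) *v x))"
      using Tx unfolding Tv Ppv Pmv .
    have c: "Q1 *v (Q2 *v x) = Q2 *v (Q1 *v x)" using comm[OF xev] by (simp add: matrix_vector_mul_assoc)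
    have e2: "(mat 1 - Q1) *v ((mat 1 - Q2) *v x) = l *s ((mat 1 + Q1) *v ((mat 1 + Q2) *v x))"
      using e1 swap_lemma[OF c] by simp
    have "cmod l \<le> mfun Q2 Q1 x" by (rule bound_lemma[OF pQ1 pQ2 x0 e1])
    moreover have "cmod l \<le> mfun Q1 Q2 x" by (rule bound_lemma[OF pQ2 pQ1 x0 e2])
    ultimately show ?thesis unfolding gd by simp
  qed
  define K where "K = {x. norm x = 1 \<and> T *v x = cd x (T *v x) *s x}"
  have normal: "x /\<^sub>R norm x \<in> K \<and> g (x /\<^sub>R norm x) = g x" if xev: "x \<in> ev T" for x
  proof -
    obtain l where x0: "x \<noteq> 0" and Tx: "T *v x = l *s x" using xev unfolding ev_def by blast
    define y where "y = x /\<^sub>R norm x"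
    have ny: "norm y = 1" unfolding y_def using x0 by simp
    have Ty: "T *v y = l *s y" unfolding y_def mv_scaleR Tx
      by (simp add: scaleR_smult vector_smult_assoc mult.commute)
    have "cd y (T *v y) = l" unfolding Ty cd_smult_right cd_unit[OF ny] by simp
    hence "y \<in> K" unfolding K_def using ny Ty by simp
    moreover have "g y = g x" unfolding gd y_def using x0
      by (simp add: mfun_scale)
    ultimately show ?thesis unfolding y_def by simp
  qed
  have Kev: "x \<in> ev T" if "x \<in> K" for x
    using that unfolding K_def ev_def by auto
  have cK: "compact K"
  proof -
    have "closed K" unfolding K_def
    proof (intro closed_Collect_conj closed_Collect_eq)
      show "continuous_on UNIV (\<lambda>x. T *v x)" by (rule cont_mv)
      show "continuous_on UNIV (\<lambda>x. cd x (T *v x) *s x)"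
        unfolding cd_def vector_scalar_mult_def
        by (intro continuous_intros cont_mv)
    qed (intro continuous_intros)+
    moreover have "bounded K" by (rule bounded_subset[OF bounded_cball[of 0 1]]) (auto simp: K_def)
    ultimately show ?thesis by (simp add: compact_eq_bounded_closed)
  qed
  obtain l0 e0 where e0: "e0 \<noteq> 0" and Te0: "T *v e0 = l0 *s e0" using eig_exists_jnf[of T] by blast
  have "e0 \<in> ev T" using e0 Te0 unfolding ev_def by blast
  hence Kne: "K \<noteq> {}" using normal by blast
  have geq: "g = (\<lambda>x. min (fP Q2 * (norm ((mat 1 - Q1) *v x) / norm ((mat 1 + Q1) *v x)))
                       (fP Q1 * (norm ((mat 1 - Q2) *v x) / norm ((mat 1 + Q2) *v x))))"
    unfolding gd mfun_eq ..
  have nz: "norm ((mat 1 + Q) *v x) \<noteq> 0" if "x \<in> K" "psd' Q" for x Q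
    using that psd'_inj unfolding K_def by fastforce
  have cg: "continuous_on K g" unfolding geq
    by (intro continuous_intros cont_mv) (use nz pQ1 pQ2 in auto)
  obtain x0 where x0K: "x0 \<in> K" and x0max: "\<And>y. y \<in> K \<Longrightarrow> g y \<le> g x0"
    using continuous_attains_sup[OF cK Kne cg] by blast
  have x0ev: "x0 \<in> ev T" using Kev[OF x0K] .
  have maxev: "\<forall>x\<in>ev T. g x \<le> g x0"
  proof
    fix x assume "x \<in> ev T"
    hence nx: "x /\<^sub>R norm x \<in> K" and gx: "g (x /\<^sub>R norm x) = g x" using normal by auto
    show "g x \<le> g x0" using x0max[OF nx] unfolding gx .
  qed
  have SP1: "(\<Sigma> + P) *v v = R *v ((mat 1 + S ** P ** S) *v (R *v v))"
    and SM1: "(\<Sigma> - P) *v v = R *v ((mat 1 - S ** P ** S) *v (R *v v))" for P v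
  proof -
    have RRv: "R *v (R *v v) = \<Sigma> *v v" using RR by (simp add: matrix_vector_mul_assoc)
    have "R *v ((S ** P ** S) *v (R *v v)) = P *v v"
      by (simp add: RSv SRv flip: matrix_vector_mul_assoc)
    thus "(\<Sigma> + P) *v v = R *v ((mat 1 + S ** P ** S) *v (R *v v))"
      "(\<Sigma> - P) *v v = R *v ((mat 1 - S ** P ** S) *v (R *v v))"
      by (simp_all add: matrix_vector_mult_add_rdistrib matrix_vector_mult_diff_rdistrib
          matrix_vector_right_distrib matrix_vector_mult_diff_distrib RRv)
  qed
  have invSP: "invertible (\<Sigma> + P)" if "psd' (S ** P ** S)" for P
  proof (rule invertible_ker)
    fix v assume "(\<Sigma> + P) *v v = 0"
    hence "R *v ((mat 1 + S ** P ** S) *v (R *v v)) = R *v 0" unfolding SP1 by simp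
    hence "(mat 1 + S ** P ** S) *v (R *v v) = 0" by (rule Rcancel)
    hence "R *v v = 0" using psd'_inj[OF that] by blast
    thus "v = 0" by (rule Rinj)
  qed
  have inv1: "invertible (\<Sigma> + P1)" by (rule invSP) (use pQ1 Q1d in simp)
  have inv2: "invertible (\<Sigma> + P2)" by (rule invSP) (use pQ2 Q2d in simp)
  have radb: "cmod l \<le> g x0" if lG: "l \<in> cmat_eigenvalues G" for l
  proof -
    obtain y where y0: "y \<noteq> 0" and Gy: "G *v y = l *s y"
      using lG unfolding cmat_eigenvalues_def by blast
    define v where "v = matrix_inv (\<Sigma> + P2) *v ((\<Sigma> - P1) *v y)"
    have Gy': "G *v y = matrix_inv (\<Sigma> + P1) *v ((\<Sigma> - P2) *v v)"
      unfolding Gd v_def by (simp only: matrix_vector_mul_assoc[symmetric])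
    have a1: "(\<Sigma> + P2) *v v = (\<Sigma> - P1) *v y" unfolding v_def by (rule minv_mult_vec(2)[OF inv2])
    have "(\<Sigma> - P2) *v v = (\<Sigma> + P1) *v (G *v y)"
      unfolding Gy' by (rule minv_mult_vec(2)[OF inv1, symmetric])
    hence a2: "(\<Sigma> - P2) *v v = l *s ((\<Sigma> + P1) *v y)" unfolding Gy by (simp add: mv_smult)
    define z where "z = R *v y"
    define p where "p = R *v v"
    have b1: "(mat 1 + Q2) *v p = (mat 1 - Q1) *v z"
      using a1 unfolding SP1 SM1 Q1d[symmetric] Q2d[symmetric] z_def p_def by (rule Rcancel)
    have "R *v ((mat 1 - Q2) *v p) = R *v (l *s ((mat 1 + Q1) *v z))"
      using a2 unfolding SP1 SM1 Q1d[symmetric] Q2d[symmetric] z_def p_def by (simp add: mv_smult)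
    hence b2: "(mat 1 - Q2) *v p = l *s ((mat 1 + Q1) *v z)" by (rule Rcancel)
    have "Pm *v z = (mat 1 - Q2) *v ((mat 1 + Q2) *v p)" unfolding Pmv b1 ..
    also have "\<dots> = (mat 1 + Q2) *v ((mat 1 - Q2) *v p)" by (rule IpP_ImP_comm)
    also have "\<dots> = l *s (Pp *v z)" unfolding b2 Ppv by (simp add: mv_smult)
    finally have "T *v z = l *s z" unfolding Tv .
    moreover have "z \<noteq> 0" unfolding z_def using Rinj y0 by blast
    ultimately have "z \<in> ev T" "T *v z = l *s z" unfolding ev_def by auto
    hence "cmod l \<le> g z" by (rule eigb)
    also have "\<dots> \<le> g x0" using maxev \<open>z \<in> ev T\<close> by blast
    finally show ?thesis .
  qed
  have "cmat_eigenvalues G \<noteq> {}"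
    using eig_exists_jnf[of G] unfolding cmat_eigenvalues_def by blast
  hence rad: "spec_radius G \<le> g x0" unfolding spec_radius_def
    by (intro cSup_least) (auto intro: radb)
  have nx0: "S *v x0 \<noteq> 0"
  proof
    assume "S *v x0 = 0"
    hence "x0 = 0" using RSv[of x0] by simp
    thus False using x0K unfolding K_def by simp
  qed
  have sumpos: "0 < Re (qform (Q1 + cmat_adj Q1) x0) + Re (qform (Q2 + cmat_adj Q2) x0)"
  proof -
    have "A + cmat_adj A = (P1 + cmat_adj P1) + (P2 + cmat_adj P2)"
      unfolding AP adj_add by (simp add: algebra_simps)
    hence "qform (A + cmat_adj A) (S *v x0) = qform (P1 + cmat_adj P1) (S *v x0) + qform (P2 + cmat_adj P2) (S *v x0)"
      by (simp add: qform_add)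
    moreover have "0 < Re (qform (A + cmat_adj A) (S *v x0))"
      using pdA nx0 unfolding pos_def_def herm_pos_def_def by blast
    ultimately show ?thesis unfolding Q1d Q2d QQ qS by simp
  qed
  have lt: "g x0 < 1"
  proof (cases "0 < Re (qform (Q1 + cmat_adj Q1) x0)")
    case True
    hence "mfun Q2 Q1 x0 < 1" by (rule lt1_lemma[OF pQ1 pQ2])
    thus ?thesis unfolding gd by simp
  next
    case False
    hence "0 < Re (qform (Q2 + cmat_adj Q2) x0)" using sumpos by linarith
    hence "mfun Q1 Q2 x0 < 1" by (rule lt1_lemma[OF pQ2 pQ1])
    thus ?thesis unfolding gd by simp
  qed
  show ?thesis using x0ev maxev rad lt by blast
qed


theorem corollary3p6:
  fixes A P1 P2 \<Sigma> :: "complex ^'n ^'n"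
  assumes "invertible A" and "pos_def A"
    and "A = P1 + P2"
    and "pos_semidef P1" and "pos_semidef P2"
    and "herm_pos_def \<Sigma>"
    and "\<And>x. x \<in> ev (matrix_inv
            ((mat 1 + matrix_inv (hpd_sqrt \<Sigma>) ** P2 ** matrix_inv (hpd_sqrt \<Sigma>)) **
             (mat 1 + matrix_inv (hpd_sqrt \<Sigma>) ** P1 ** matrix_inv (hpd_sqrt \<Sigma>))) **
           ((mat 1 - matrix_inv (hpd_sqrt \<Sigma>) ** P2 ** matrix_inv (hpd_sqrt \<Sigma>)) **
             (mat 1 - matrix_inv (hpd_sqrt \<Sigma>) ** P1 ** matrix_inv (hpd_sqrt \<Sigma>))))
          \<Longrightarrow> (matrix_inv (hpd_sqrt \<Sigma>) ** P1 ** matrix_inv (hpd_sqrt \<Sigma>)) **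
              (matrix_inv (hpd_sqrt \<Sigma>) ** P2 ** matrix_inv (hpd_sqrt \<Sigma>)) *v x
            = (matrix_inv (hpd_sqrt \<Sigma>) ** P2 ** matrix_inv (hpd_sqrt \<Sigma>)) **
              (matrix_inv (hpd_sqrt \<Sigma>) ** P1 ** matrix_inv (hpd_sqrt \<Sigma>)) *v x"
  shows "let S = matrix_inv (hpd_sqrt \<Sigma>);
             Pt1 = S ** P1 ** S;
             Pt2 = S ** P2 ** S;
             Pplus = (mat 1 + Pt2) ** (mat 1 + Pt1);
             Pminus = (mat 1 - Pt2) ** (mat 1 - Pt1);
             \<Gamma> = matrix_inv (\<Sigma> + P1) ** (\<Sigma> - P2) ** matrix_inv (\<Sigma> + P2) ** (\<Sigma> - P1);
             g = (\<lambda>x. min (mfun Pt2 Pt1 x) (mfun Pt1 Pt2 x))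
         in \<exists>x0 \<in> ev (matrix_inv Pplus ** Pminus).
              (\<forall>x \<in> ev (matrix_inv Pplus ** Pminus). g x \<le> g x0) \<and>
              spec_radius \<Gamma> \<le> g x0 \<and> g x0 < 1"
    unfolding Let_def
  by (rule core[OF assms(2) assms(3) assms(4) assms(5) assms(6) refl refl refl refl refl refl refl refl refl assms(7)])

end
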